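(* For any optimal solution $\mathbf p$ (pure strategy profile maximizing $TR$), $TR(\mathbf p)\le \mu m\left(1-\frac{\mu}{n_1\phi+\mu}\right)$.
   Context: Network model: there are $m\ge 2$ source nodes $s_1,\dots,s_m$ and one destination $d$. Source $s_i$ has a set $N_i$ of $n_i$ users, with $n_1>n_2>\dots>n_m$. Each user generates an independent Poisson flow of packets of rate $\phi>0$; each direct link $(s_i,d)$ has service rate $\mu>0$; each sidelink loses packets independently with probability $q\in[0,1]$, and $\bar q=1-q$. A pure strategy of a user in $N_i$ is either the direct path (DP) $(s_i,d)$ or an indirect path (IP) $(s_i,s_j,d)$, $j\neq i$. For a pure profile, $u_i$ is the number of users of $N_i$ choosing DP and $v_i$ the number of users of other sources choosing an IP $(s_j,s_i,d)$. With $T_i=u_i\phi+v_i\bar q\phi$, the total traffic rate is $TR=\sum_i\frac{\mu T_i}{T_i+\mu}$. *)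

theory Defs
  imports Complex_Main
begin

text \<open>Sources are indexed 0..<m (source s_(i+1) of the paper is index i); the users of
source i are indexed 0..<n i.  A pure strategy profile p assigns to user k of source i
a source index p i k < m: p i k = i means the direct path (s_i,d), p i k = j \<noteq> i means
the indirect path (s_i,s_j,d).\<close>

definition valid_profile :: "nat \<Rightarrow> (nat \<Rightarrow> nat) \<Rightarrow> (nat \<Rightarrow> nat \<Rightarrow> nat) \<Rightarrow> bool" where
  "valid_profile m n p \<longleftrightarrow> (\<forall>i<m. \<forall>k<n i. p i k < m)"

definition u_cnt :: "(nat \<Rightarrow> nat) \<Rightarrow> (nat \<Rightarrow> nat \<Rightarrow> nat) \<Rightarrow> nat \<Rightarrow> nat" where
  "u_cnt n p i = card {k. k < n i \<and> p i k = i}"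

definition v_cnt :: "nat \<Rightarrow> (nat \<Rightarrow> nat) \<Rightarrow> (nat \<Rightarrow> nat \<Rightarrow> nat) \<Rightarrow> nat \<Rightarrow> nat" where
  "v_cnt m n p i = card {(j, k). j < m \<and> j \<noteq> i \<and> k < n j \<and> p j k = i}"

definition T_rate :: "nat \<Rightarrow> (nat \<Rightarrow> nat) \<Rightarrow> real \<Rightarrow> real \<Rightarrow> (nat \<Rightarrow> nat \<Rightarrow> nat) \<Rightarrow> nat \<Rightarrow> real" where
  "T_rate m n phi q p i = real (u_cnt n p i) * phi + real (v_cnt m n p i) * (1 - q) * phi"

definition TR :: "nat \<Rightarrow> (nat \<Rightarrow> nat) \<Rightarrow> real \<Rightarrow> real \<Rightarrow> real \<Rightarrow> (nat \<Rightarrow> nat \<Rightarrow> nat) \<Rightarrow> real" where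
  "TR m n phi mu q p = (\<Sum>i<m. mu * T_rate m n phi q p i / (T_rate m n phi q p i + mu))"

definition optimal_profile :: "nat \<Rightarrow> (nat \<Rightarrow> nat) \<Rightarrow> real \<Rightarrow> real \<Rightarrow> real \<Rightarrow> (nat \<Rightarrow> nat \<Rightarrow> nat) \<Rightarrow> bool" where
  "optimal_profile m n phi mu q p \<longleftrightarrow> valid_profile m n p \<and>
     (\<forall>p'. valid_profile m n p' \<longrightarrow> TR m n phi mu q p' \<le> TR m n phi mu q p)"

end

theory Submission
  imports Defs
begin

lemma uv_card:
  assumes "i < m"
  shows "u_cnt n p i + v_cnt m n p i = card {(j,k). j < m \<and> k < n j \<and> p j k = i}"
proof -
  have e: "{(j,k). j < m \<and> k < n j \<and> p j k = i} =
        Pair i ` {k. k < n i \<and> p i k = i} \<union> {(j, k). j < m \<and> j \<noteq> i \<and> k < n j \<and> p j k = i}"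
    using assms by auto
  have f1: "finite (Pair i ` {k. k < n i \<and> p i k = i})" by simp
  have f2: "finite {(j, k). j < m \<and> j \<noteq> i \<and> k < n j \<and> p j k = i}"
    by (rule finite_subset[of _ "Sigma {..<m} (\<lambda>j. {..<n j})"]) auto
  have "card (Pair i ` {k. k < n i \<and> p i k = i}) = u_cnt n p i"
    unfolding u_cnt_def by (simp add: card_image inj_on_def)
  then show ?thesis unfolding e v_cnt_def
    by (subst card_Un_disjoint[OF f1 f2]) auto
qed

lemma sum_uv:
  "(\<Sum>i<m. real (u_cnt n p i + v_cnt m n p i)) \<le> (\<Sum>j<m. real (n j))"
proof -
  let ?S = "\<lambda>i. {(j,k). j < m \<and> k < n j \<and> p j k = i}"
  have fin: "\<And>i. finite (?S i)"
    by (rule finite_subset[of _ "Sigma {..<m} (\<lambda>j. {..<n j})"]) auto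
  have "(\<Sum>i<m. u_cnt n p i + v_cnt m n p i) = (\<Sum>i<m. card (?S i))"
    by (rule sum.cong) (auto simp: uv_card)
  also have "\<dots> = card (\<Union>i<m. ?S i)"
    by (rule card_UN_disjoint[symmetric]) (auto simp: fin)
  also have "\<dots> \<le> card (Sigma {..<m} (\<lambda>j. {..<n j}))"
    by (rule card_mono) auto
  also have "\<dots> = (\<Sum>j<m. n j)" by simp
  finally show ?thesis by (metis of_nat_le_iff of_nat_sum)
qed

lemma tangent:
  fixes x a :: real assumes "x > 0" "a > 0"
  shows "1 / x \<ge> 2 / a - x / a^2"
proof -
  have "(x - a)^2 \<ge> 0" by simp
  then have "x^2 - 2*a*x + a^2 \<ge> 0" by (simp add: power2_eq_square algebra_simps)
  then show ?thesis using assms by (simp add: field_simps power2_eq_square)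
qed

theorem lemma3:
  fixes m :: nat and n :: "nat \<Rightarrow> nat" and phi mu q :: real
    and p :: "nat \<Rightarrow> nat \<Rightarrow> nat"
  assumes "m \<ge> 2"
    and "\<And>i j. i < j \<Longrightarrow> j < m \<Longrightarrow> n i > n j"
    and "phi > 0" and "mu > 0" and "0 \<le> q" and "q \<le> 1"
    and "optimal_profile m n phi mu q p"
  shows "TR m n phi mu q p \<le> mu * real m * (1 - mu / (real (n 0) * phi + mu))"
proof -
  define T where "T = T_rate m n phi q p"
  define A where "A = real (n 0) * phi + mu"
  have A: "A > 0" using assms(3,4) unfolding A_def by (simp add: add_nonneg_pos)
  have T0: "T i \<ge> 0" for i
    unfolding T_def T_rate_def using assms(3,5,6) by simp
  have Tle: "T i \<le> phi * real (u_cnt n p i + v_cnt m n p i)" for i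
  proof -
    have "real (v_cnt m n p i) * (1 - q) * phi \<le> real (v_cnt m n p i) * phi"
      using assms(3,5) by (simp add: mult_left_le mult_le_cancel_right)
    then show ?thesis unfolding T_def T_rate_def by (simp add: algebra_simps)
  qed
  have nle: "real (n j) \<le> real (n 0)" if "j < m" for j
  proof (cases "j = 0")
    case False then show ?thesis using assms(2)[of 0 j] that by simp
  qed simp
  have ST: "(\<Sum>i<m. T i) \<le> real m * real (n 0) * phi"
  proof -
    have "(\<Sum>i<m. T i) \<le> (\<Sum>i<m. phi * real (u_cnt n p i + v_cnt m n p i))"
      by (rule sum_mono) (rule Tle)
    also have "\<dots> = phi * (\<Sum>i<m. real (u_cnt n p i + v_cnt m n p i))"
      by (simp add: sum_distrib_left)
    also have "\<dots> \<le> phi * (\<Sum>j<m. real (n j))"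
      using sum_uv assms(3) by (intro mult_left_mono) auto
    also have "\<dots> \<le> phi * (\<Sum>j<m. real (n 0))"
      using assms(3) nle by (intro mult_left_mono sum_mono) auto
    finally show ?thesis by (simp add: algebra_simps)
  qed
  have tm: "mu * T i / (T i + mu) \<le> mu - mu^2 * (2 / A - (T i + mu) / A^2)" for i
  proof -
    have pos: "T i + mu > 0" using T0[of i] assms(4) by linarith
    have "mu * T i / (T i + mu) = mu - mu^2 * (1 / (T i + mu))"
      using pos by (simp add: field_simps power2_eq_square)
    also have "\<dots> \<le> mu - mu^2 * (2 / A - (T i + mu) / A^2)"
      using mult_left_mono[OF tangent[OF pos A], of "mu^2"] by simp
    finally show ?thesis .
  qed
  have "TR m n phi mu q p = (\<Sum>i<m. mu * T i / (T i + mu))"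
    unfolding TR_def T_def by simp
  also have "\<dots> \<le> (\<Sum>i<m. mu - mu^2 * (2 / A - (T i + mu) / A^2))"
    by (rule sum_mono) (rule tm)
  also have "\<dots> = real m * mu - mu^2 * (2 * real m / A) + mu^2 * ((\<Sum>i<m. T i) + real m * mu) / A^2"
    by (simp add: sum_subtractf sum_distrib_left sum.distrib sum_divide_distrib[symmetric] sum_distrib_right[symmetric] algebra_simps)
  also have "\<dots> \<le> real m * mu - mu^2 * (2 * real m / A) + mu^2 * (real m * A) / A^2"
  proof -
    have "(\<Sum>i<m. T i) + real m * mu \<le> real m * A"
      using ST unfolding A_def by (simp add: algebra_simps)
    then show ?thesis using A
      by (intro add_left_mono divide_right_mono mult_left_mono) auto
  qed
  also have "\<dots> = mu * real m * (1 - mu / A)"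
    using A by (simp add: field_simps power2_eq_square)
  finally show ?thesis unfolding A_def .
qed

end
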